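(* Let $M\in S_d^+$, let $\mathcal T$ be an $M$-reduced mesh and $\Lambda$ the associated Hopf–Lax operator. Let $\delta_+,\delta_-:\mathbb Z^d\to\mathbb R_+\cup\{\infty\}$ be respectively a discrete super-solution and a discrete sub-solution. Then $\delta_-\le\delta_+$ on $\mathbb Z^d$.
   Context: $S_d^+$ is the set of $d\times d$ symmetric positive definite matrices; $\langle u,v\rangle_M:=u^TMv$, $\|u\|_M:=\sqrt{\langle u,u\rangle_M}$. An $M$-reduced mesh is a finite conforming mesh $\mathcal T$ of simplices in $\mathbb R^d$ such that: (I) the union of its simplices is a neighborhood of the origin; (II) the vertices of each $T\in\mathcal T$ lie in $\mathbb Z^d$ and $T$ has volume $1/d!$; (III) each $T\in\mathcal T$ has the origin as a vertex, and its other vertices $v_1,\dots,v_d$ satisfy $\langle v_i,v_j\rangle_M\ge0$ for all $i,j$. For $\delta:\mathbb Z^d\to\mathbb R_+\cup\{\infty\}$ and $z\in\mathbb Z^d$, $\Lambda(\delta,z):=\min\{\|\sum_{i=1}^k\alpha_iv_i\|_M+\sum_{i=1}^k\alpha_i\delta(z+v_i)\}$ over $1\le k\le d$, $\alpha_i\ge0$ with $\sum_i\alpha_i=1$, and non-zero vertices $v_1,\dots,v_k$ of a common simplex of $\mathcal T$ (convention $0\times\infty=0$). A map $\delta:\mathbb Z^d\to\mathbb R_+\cup\{\infty\}$ is a super-solution (resp. sub-solution) if $\delta(0)=0$ and $\delta(z)\ge\Lambda(\delta,z)$ (resp. $\delta(z)\le\Lambda(\delta,z)$) for all $z\in\mathbb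 Z^d\setminus\{0\}$. *)

theory Defs
  imports "HOL-Analysis.Analysis" "HOL-Library.Extended_Nonnegative_Real"
begin

text \<open>Lattice points of Z^d are represented by the type int^'n; d = CARD('n).\<close>

definition rvec :: "int ^ 'n \<Rightarrow> real ^ 'n" where
  "rvec z = (\<chi> i. real_of_int (z $ i))"

definition sym_posdef :: "real ^ 'n ^ 'n \<Rightarrow> bool" where
  "sym_posdef M \<longleftrightarrow> transpose M = M \<and> (\<forall>x. x \<noteq> 0 \<longrightarrow> x \<bullet> (M *v x) > 0)"

definition inner_M :: "real ^ 'n ^ 'n \<Rightarrow> real ^ 'n \<Rightarrow> real ^ 'n \<Rightarrow> real" where
  "inner_M M u v = u \<bullet> (M *v v)"

definition norm_M :: "real ^ 'n ^ 'n \<Rightarrow> real ^ 'n \<Rightarrow> real" where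
  "norm_M M u = sqrt (inner_M M u u)"

text \<open>A simplex of the mesh is given by its finite set of d+1 integer vertices;
  the simplex itself is the convex hull of (the real images of) these vertices.\<close>

definition simplex_of :: "(int ^ 'n) set \<Rightarrow> (real ^ 'n) set" where
  "simplex_of T = convex hull (rvec ` T)"

definition M_reduced_mesh :: "real ^ 'n ^ 'n \<Rightarrow> (int ^ 'n) set set \<Rightarrow> bool" where
  "M_reduced_mesh M \<T> \<longleftrightarrow>
     finite \<T> \<and>
     (\<forall>T\<in>\<T>. finite T \<and> card T = CARD('n) + 1) \<and>
     \<comment> \<open>conforming: two simplices meet in a common face\<close>
     (\<forall>T1\<in>\<T>. \<forall>T2\<in>\<T>. simplex_of T1 \<inter> simplex_of T2 = simplex_of (T1 \<inter> T2)) \<and>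
     \<comment> \<open>(I) the union of the simplices is a neighbourhood of the origin\<close>
     0 \<in> interior (\<Union>T\<in>\<T>. simplex_of T) \<and>
     \<comment> \<open>(II) integer vertices (by typing) and volume 1/d!\<close>
     (\<forall>T\<in>\<T>. measure lebesgue (simplex_of T) = 1 / fact CARD('n)) \<and>
     \<comment> \<open>(III) origin is a vertex, other vertices pairwise M-acute\<close>
     (\<forall>T\<in>\<T>. 0 \<in> T \<and> (\<forall>v\<in>T - {0}. \<forall>w\<in>T - {0}. inner_M M (rvec v) (rvec w) \<ge> 0))"

text \<open>A choice of non-zero vertices v_1..v_k of a common simplex with
  convex weights is encoded by a non-empty set S of non-zero vertices of some T and
  weights alpha on S (repeated vertices can be merged without changing the value).
  The product in ennreal satisfies 0 * \<infinity> = 0.\<close>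

definition hopf_lax ::
  "real ^ 'n ^ 'n \<Rightarrow> (int ^ 'n) set set \<Rightarrow> (int ^ 'n \<Rightarrow> ennreal) \<Rightarrow> int ^ 'n \<Rightarrow> ennreal" where
  "hopf_lax M \<T> \<delta> z = Inf {ennreal (norm_M M (\<Sum>v\<in>S. \<alpha> v *\<^sub>R rvec v))
        + (\<Sum>v\<in>S. ennreal (\<alpha> v) * \<delta> (z + v)) | S \<alpha>.
      (\<exists>T\<in>\<T>. S \<subseteq> T - {0}) \<and> S \<noteq> {} \<and> (\<forall>v\<in>S. \<alpha> v \<ge> 0) \<and> (\<Sum>v\<in>S. \<alpha> v) = 1}"

definition super_solution ::
  "real ^ 'n ^ 'n \<Rightarrow> (int ^ 'n) set set \<Rightarrow> (int ^ 'n \<Rightarrow> ennreal) \<Rightarrow> bool" where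
  "super_solution M \<T> \<delta> \<longleftrightarrow> \<delta> 0 = 0 \<and> (\<forall>z. z \<noteq> 0 \<longrightarrow> \<delta> z \<ge> hopf_lax M \<T> \<delta> z)"

definition sub_solution ::
  "real ^ 'n ^ 'n \<Rightarrow> (int ^ 'n) set set \<Rightarrow> (int ^ 'n \<Rightarrow> ennreal) \<Rightarrow> bool" where
  "sub_solution M \<T> \<delta> \<longleftrightarrow> \<delta> 0 = 0 \<and> (\<forall>z. z \<noteq> 0 \<longrightarrow> \<delta> z \<le> hopf_lax M \<T> \<delta> z)"

end

theory Submission
  imports Defs
begin

lemma inner_M_sum:
  assumes "finite S"
  shows "inner_M M (\<Sum>v\<in>S. a v *\<^sub>R rvec v) (\<Sum>w\<in>S. b w *\<^sub>R rvec w)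
     = (\<Sum>v\<in>S. \<Sum>w\<in>S. a v * b w * inner_M M (rvec v) (rvec w))"
proof -
  have lin: "linear ((*v) M)" by (rule matrix_vector_mul_linear)
  have "M *v (\<Sum>w\<in>S. b w *\<^sub>R rvec w) = (\<Sum>w\<in>S. b w *\<^sub>R (M *v rvec w))"
    by (simp add: linear_sum[OF lin] matrix_vector_mult_scaleR)
  then show ?thesis
    unfolding inner_M_def
    apply (simp add: inner_sum_left inner_sum_right sum_distrib_left mult.assoc)
    apply (subst sum.swap) apply (simp add: mult_ac)
    done
qed

lemma sq_sum_le: fixes f :: "'a \<Rightarrow> real"
  assumes "finite A" "card A \<le> N"
  shows "(\<Sum>i\<in>A. f i)^2 \<le> N * (\<Sum>i\<in>A. (f i)^2)"
proof -
  have "(\<Sum>i\<in>A. f i)^2 \<le> (\<Sum>i\<in>A. (f i)^2) * card A" by (rule sum_squared_le_sum_of_squares)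
  also have "\<dots> \<le> (\<Sum>i\<in>A. (f i)^2) * N"
    by (rule mult_left_mono) (use assms in \<open>auto intro: sum_nonneg\<close>)
  finally show ?thesis by (simp add: mult.commute)
qed

lemma dsum_split:
  fixes f :: "'a \<Rightarrow> 'a \<Rightarrow> real"
  assumes "finite S" "L \<subseteq> S" "\<And>v w. v\<in>S \<Longrightarrow> w\<in>S \<Longrightarrow> f v w \<ge> 0"
  shows "(\<Sum>v\<in>S. \<Sum>w\<in>S. f v w) \<ge> (\<Sum>v\<in>L. \<Sum>w\<in>L. f v w) + (\<Sum>v\<in>S-L. f v v)"
proof -
  have fL: "finite L" using finite_subset[OF assms(2) assms(1)] .
  have e1: "(\<Sum>v\<in>S. \<Sum>w\<in>S. f v w) = (\<Sum>v\<in>L. \<Sum>w\<in>S. f v w) + (\<Sum>v\<in>S-L. \<Sum>w\<in>S. f v w)"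
    using assms by (metis sum.subset_diff add.commute)
  have "(\<Sum>v\<in>L. \<Sum>w\<in>L. f v w) \<le> (\<Sum>v\<in>L. \<Sum>w\<in>S. f v w)"
    apply (rule sum_mono) apply (rule sum_mono2) using assms by auto
  moreover have "(\<Sum>v\<in>S-L. f v v) \<le> (\<Sum>v\<in>S-L. \<Sum>w\<in>S. f v w)"
    apply (rule sum_mono) apply (rule member_le_sum) using assms by auto
  ultimately show ?thesis using e1 by linarith
qed

lemma dsum_diag:
  fixes f :: "'a \<Rightarrow> 'a \<Rightarrow> real"
  assumes "finite S" "\<And>v w. v\<in>S \<Longrightarrow> w\<in>S \<Longrightarrow> f v w \<ge> 0"
  shows "(\<Sum>v\<in>S. \<Sum>w\<in>S. f v w) \<ge> (\<Sum>v\<in>S. f v v)"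
  using dsum_split[of S "{}" f] assms by simp

lemma core:
  fixes S L :: "'a set" and \<alpha> x :: "'a \<Rightarrow> real" and G :: "'a \<Rightarrow> 'a \<Rightarrow> real"
  assumes fin: "finite S" and LS: "L \<subseteq> S" and cardS: "card S \<le> N" and Npos: "N > 0"
    and apos: "\<And>v. v\<in>S \<Longrightarrow> \<alpha> v \<ge> 0" and asum: "(\<Sum>v\<in>S. \<alpha> v) = 1"
    and Gpos: "\<And>v w. v\<in>S \<Longrightarrow> w\<in>S \<Longrightarrow> G v w \<ge> 0"
    and Gdiag: "\<And>v. v\<in>S \<Longrightarrow> G v v \<ge> m2" and m2: "m2 > 0"
    and Gup: "\<And>v w. v\<in>S \<Longrightarrow> w\<in>S \<Longrightarrow> G v w \<le> R2"
    and lam: "0 \<le> lam" "lam < 1"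
    and kdef: "k = min ((m2 / N) / (2 * sqrt R2)) ((1 - lam) * sqrt (m2 / N)) / 4"
    and ineq: "sqrt (\<Sum>v\<in>S. \<Sum>w\<in>S. \<alpha> v * \<alpha> w * G v w) + (\<Sum>v\<in>L. \<alpha> v * x v)
               + (1 - (\<Sum>v\<in>L. \<alpha> v)) * (D - k) \<le> D + k"
  shows "(\<Sum>v\<in>L. \<alpha> v) > 0 \<and>
         lam * sqrt (\<Sum>v\<in>L. \<Sum>w\<in>L. \<alpha> v * \<alpha> w * G v w) + (\<Sum>v\<in>L. \<alpha> v * x v)
            < (\<Sum>v\<in>L. \<alpha> v) * D"
proof -
  define s where "s = (\<Sum>v\<in>L. \<alpha> v)"
  define a where "a = (\<Sum>v\<in>S-L. \<alpha> v)"
  define QS where "QS = (\<Sum>v\<in>S. \<Sum>w\<in>S. \<alpha> v * \<alpha> w * G v w)"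
  define QL where "QL = (\<Sum>v\<in>L. \<Sum>w\<in>L. \<alpha> v * \<alpha> w * G v w)"
  have fL: "finite L" using finite_subset[OF LS fin] .
  have sa: "s + a = 1" using asum fin LS unfolding s_def a_def by (metis sum.subset_diff add.commute)
  have s0: "s \<ge> 0" unfolding s_def using apos LS by (auto intro: sum_nonneg)
  have a0: "a \<ge> 0" unfolding a_def using apos by (auto intro: sum_nonneg)
  have R2pos: "R2 > 0"
  proof -
    have "S \<noteq> {}" using asum by auto
    then obtain v where "v \<in> S" by auto
    then show ?thesis using Gup[of v v] Gdiag[of v] m2 by linarith
  qed
  have fpos: "\<And>v w. v\<in>S \<Longrightarrow> w\<in>S \<Longrightarrow> \<alpha> v * \<alpha> w * G v w \<ge> 0"
    using apos Gpos by auto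
  have "QS \<ge> QL + (\<Sum>v\<in>S-L. \<alpha> v * \<alpha> v * G v v)"
    unfolding QS_def QL_def by (rule dsum_split[OF fin LS fpos])
  moreover have "(\<Sum>v\<in>S-L. \<alpha> v * \<alpha> v * G v v) \<ge> (\<Sum>v\<in>S-L. m2 * (\<alpha> v)^2)"
  proof (rule sum_mono)
    fix v assume "v \<in> S - L"
    then have "m2 \<le> G v v" using Gdiag by auto
    then show "m2 * (\<alpha> v)^2 \<le> \<alpha> v * \<alpha> v * G v v"
      by (simp add: power2_eq_square mult_right_mono mult.commute)
  qed
  moreover have "(\<Sum>v\<in>S-L. (\<alpha> v)^2) \<ge> a^2 / N"
  proof -
    have "a^2 \<le> N * (\<Sum>v\<in>S-L. (\<alpha> v)^2)" unfolding a_def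
      apply (rule sq_sum_le) using fin cardS card_mono[OF fin, of "S-L"] by auto
    then show ?thesis using Npos by (simp add: field_simps)
  qed
  ultimately have QSL: "QS \<ge> QL + m2 * a^2 / N"
  proof -
    assume h1: "QS \<ge> QL + (\<Sum>v\<in>S-L. \<alpha> v * \<alpha> v * G v v)"
      and h2: "(\<Sum>v\<in>S-L. \<alpha> v * \<alpha> v * G v v) \<ge> (\<Sum>v\<in>S-L. m2 * (\<alpha> v)^2)"
      and h3: "(\<Sum>v\<in>S-L. (\<alpha> v)^2) \<ge> a^2 / N"
    have "m2 * (a^2/N) \<le> m2 * (\<Sum>v\<in>S-L. (\<alpha> v)^2)" by (rule mult_left_mono[OF h3]) (use m2 in auto)
    then show ?thesis using h1 h2 by (simp add: sum_distrib_left)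
  qed
  have QLlow: "QL \<ge> m2 * s^2 / N"
  proof -
    have "QL \<ge> (\<Sum>v\<in>L. \<alpha> v * \<alpha> v * G v v)" unfolding QL_def
      apply (rule dsum_diag[OF fL]) using fpos LS by auto
    moreover have "(\<Sum>v\<in>L. \<alpha> v * \<alpha> v * G v v) \<ge> (\<Sum>v\<in>L. m2 * (\<alpha> v)^2)"
    proof (rule sum_mono)
      fix v assume "v \<in> L"
      then have "m2 \<le> G v v" using Gdiag LS by auto
      then show "m2 * (\<alpha> v)^2 \<le> \<alpha> v * \<alpha> v * G v v"
        by (simp add: power2_eq_square mult_right_mono mult.commute)
    qed
    moreover have "(\<Sum>v\<in>L. (\<alpha> v)^2) \<ge> s^2 / N"
    proof -
      have "s^2 \<le> N * (\<Sum>v\<in>L. (\<alpha> v)^2)" unfolding s_def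
        apply (rule sq_sum_le) using fL cardS card_mono[OF fin LS] by auto
      then show ?thesis using Npos by (simp add: field_simps)
    qed
    ultimately show ?thesis
    proof -
      assume h1: "QL \<ge> (\<Sum>v\<in>L. \<alpha> v * \<alpha> v * G v v)"
        and h2: "(\<Sum>v\<in>L. \<alpha> v * \<alpha> v * G v v) \<ge> (\<Sum>v\<in>L. m2 * (\<alpha> v)^2)"
        and h3: "(\<Sum>v\<in>L. (\<alpha> v)^2) \<ge> s^2 / N"
      have "m2 * (s^2/N) \<le> m2 * (\<Sum>v\<in>L. (\<alpha> v)^2)" by (rule mult_left_mono[OF h3]) (use m2 in auto)
      then show ?thesis using h1 h2 by (simp add: sum_distrib_left)
    qed
  qed
  have QSup: "QS \<le> R2"
  proof -
    have "QS \<le> (\<Sum>v\<in>S. \<Sum>w\<in>S. \<alpha> v * \<alpha> w * R2)" unfolding QS_def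
      apply (rule sum_mono)+ using Gup apos by (simp add: mult_left_mono)
    also have "\<dots> = R2" using asum by (simp add: sum_distrib_left[symmetric] sum_distrib_right[symmetric])
    finally show ?thesis .
  qed
  have QLup: "QL \<le> R2"
  proof -
    have "QL \<le> (\<Sum>v\<in>L. \<Sum>w\<in>L. \<alpha> v * \<alpha> w * R2)" unfolding QL_def
      apply (rule sum_mono)+ using Gup apos LS by (meson subsetD mult_left_mono mult_nonneg_nonneg)
    also have "\<dots> = R2 * s * s" unfolding s_def
      by (simp add: sum_distrib_left[symmetric] sum_distrib_right[symmetric] mult_ac)
    also have "\<dots> \<le> R2"
    proof -
      have "s * s \<le> 1" using s0 sa a0 by (simp add: mult_le_one)
      then show ?thesis using R2pos by (simp add: mult.assoc mult_left_le)
    qed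
    finally show ?thesis .
  qed
  define c0 where "c0 = m2 / N"
  have c0pos: "c0 > 0" using m2 Npos unfolding c0_def by auto
  define P where "P = sqrt QS"
  define PL where "PL = sqrt QL"
  have QLnn: "QL \<ge> 0" using QLlow m2 Npos by (smt (verit) divide_nonneg_nonneg zero_le_power2 mult_nonneg_nonneg of_nat_0_le_iff)
  have sq: "s^2 + a^2 \<ge> 1/2"
  proof -
    have "s^2+a^2 = ((s+a)^2 + (s-a)^2)/2" by (simp add: power2_eq_square field_simps)
    then show ?thesis using sa by simp
  qed
  have QSpos: "QS > 0"
  proof -
    have "c0 * (s^2 + a^2) = m2 * s^2 / N + m2 * a^2 / N" unfolding c0_def by (simp add: add_divide_distrib algebra_simps)
    then have "QS \<ge> c0 * (s^2 + a^2)" using QSL QLlow by linarith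
    moreover have "c0 * (s^2 + a^2) > 0" using c0pos sq by (intro mult_pos_pos) auto
    ultimately show ?thesis by linarith
  qed
  have Ppos: "P > 0" unfolding P_def using QSpos by simp
  have PLnn: "PL \<ge> 0" unfolding PL_def using QLnn by simp
  have Pup: "P \<le> sqrt R2" unfolding P_def using QSup by simp
  have PLup: "PL \<le> sqrt R2" unfolding PL_def using QLup by simp
  have sR2: "sqrt R2 > 0" using R2pos by simp
  have diff: "P - PL \<ge> c0 * a^2 / (2 * sqrt R2)"
  proof -
    have "P^2 - PL^2 = QS - QL" unfolding P_def PL_def using QSpos QLnn by simp
    also have "\<dots> \<ge> c0 * a^2" using QSL unfolding c0_def by simp
    finally have h: "(P - PL) * (P + PL) \<ge> c0 * a^2" by (simp add: power2_eq_square algebra_simps)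
    have "P + PL \<le> 2 * sqrt R2" using Pup PLup by linarith
    have ca: "c0 * a^2 \<ge> 0" using c0pos by simp
    show ?thesis
    proof (cases "P - PL \<ge> 0")
      case True
      then have "(P - PL) * (P + PL) \<le> (P - PL) * (2 * sqrt R2)"
        using \<open>P + PL \<le> 2 * sqrt R2\<close> by (rule mult_left_mono[rotated])
      then have "c0 * a^2 \<le> (P - PL) * (2 * sqrt R2)" using h by linarith
      then show ?thesis using sR2 by (simp add: field_simps)
    next
      case False
      then have "(P - PL) * (P + PL) < 0" using Ppos PLnn by (simp add: mult_neg_pos)
      then show ?thesis using h ca by linarith
    qed
  qed
  have PLlow: "PL \<ge> sqrt c0 * s"
  proof -
    have "sqrt (c0 * s^2) \<le> PL" unfolding PL_def using QLlow unfolding c0_def by (simp add: field_simps)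
    then show ?thesis using s0 c0pos by (simp add: real_sqrt_mult)
  qed
  define c1 where "c1 = c0 / (2 * sqrt R2)"
  define c2 where "c2 = (1 - lam) * sqrt c0"
  have kk: "k = min c1 c2 / 4" unfolding kdef c1_def c2_def c0_def by simp
  have c1pos: "c1 > 0" unfolding c1_def using c0pos sR2 by simp
  have c2pos: "c2 > 0" unfolding c2_def using c0pos lam by simp
  have kpos: "k > 0" using kk c1pos c2pos by simp
  have t1: "P - PL \<ge> c1 * a^2" using diff unfolding c1_def by (simp add: field_simps)
  have t2: "(1 - lam) * PL \<ge> c2 * s" unfolding c2_def using PLlow lam
    by (simp add: mult.assoc mult_left_mono)
  have t3: "c1 * a^2 + c2 * s \<ge> 4 * k * (a^2 + s)"
  proof -
    have "4 * k \<le> c1" "4 * k \<le> c2" using kk by auto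
    then show ?thesis using s0 by (smt (verit) mult_right_mono zero_le_power2 distrib_left)
  qed
  have t4: "a^2 + s \<ge> 3/4"
  proof -
    have "a^2 + s = (a - 1/2)^2 + 3/4" using sa by (simp add: power2_eq_square field_simps)
    then show ?thesis by simp
  qed
  have main: "P - lam * PL \<ge> 3 * k"
  proof -
    have "P - lam * PL = (P - PL) + (1 - lam) * PL" by (simp add: algebra_simps)
    also have "\<dots> \<ge> 4 * k * (a^2 + s)" using t1 t2 t3 by linarith
    finally have "P - lam * PL \<ge> 4 * k * (a^2 + s)" .
    moreover have "4 * k * (a^2 + s) \<ge> 4 * k * (3/4)" using t4 kpos by (simp add: mult_left_mono)
    ultimately show ?thesis by linarith
  qed
  have ineq': "P + (\<Sum>v\<in>L. \<alpha> v * x v) + a * (D - k) \<le> D + k"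
    using ineq sa unfolding P_def QS_def s_def by (smt (verit))
  have ak: "a * k \<le> k" using a0 sa s0 kpos by (simp add: mult_left_le_one_le)
  have res: "lam * PL + (\<Sum>v\<in>L. \<alpha> v * x v) < s * D"
  proof -
    have "a * (D - k) = a * D - a * k" by (simp add: algebra_simps)
    moreover have "a * D = D - s * D" using sa by (metis add_diff_cancel_left' left_diff_distrib' mult_1)
    ultimately show ?thesis using ineq' main ak kpos by linarith
  qed
  have spos: "s > 0"
  proof (rule ccontr)
    assume "\<not> s > 0"
    then have "s = 0" using s0 by simp
    then have z: "\<forall>v\<in>L. \<alpha> v = 0" unfolding s_def using sum_nonneg_eq_0_iff[OF fL] apos LS by blast
    then have "(\<Sum>v\<in>L. \<alpha> v * x v) = 0" by simp
    moreover have "QL = 0" unfolding QL_def using z by simp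
    ultimately show False using res \<open>s = 0\<close> unfolding PL_def by simp
  qed
  show ?thesis using spos res unfolding s_def PL_def QL_def by simp
qed

lemma rvec_nz: "v \<noteq> 0 \<Longrightarrow> rvec v \<noteq> 0"
  unfolding rvec_def by (auto simp: vec_eq_iff)

lemma norm_M_sum:
  assumes "finite S"
  shows "norm_M M (\<Sum>v\<in>S. a v *\<^sub>R rvec v)
     = sqrt (\<Sum>v\<in>S. \<Sum>w\<in>S. a v * a w * inner_M M (rvec v) (rvec w))"
  unfolding norm_M_def using inner_M_sum[OF assms] by simp

lemma scaled:
  fixes M :: "real ^ 'n ^ 'n" and \<T> :: "(int ^ 'n) set set"
    and \<delta>p \<delta>m :: "int ^ 'n \<Rightarrow> ennreal"
  assumes posdef: "sym_posdef M"
    and mesh: "M_reduced_mesh M \<T>"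
    and sup: "super_solution M \<T> \<delta>p"
    and sub: "sub_solution M \<T> \<delta>m"
    and lam: "0 \<le> lam" "lam < 1"
  shows "ennreal lam * \<delta>m z \<le> \<delta>p z"
proof -
  define G where "G v w = inner_M M (rvec v) (rvec w)" for v w
  define V where "V = (\<Union>\<T>) - {0}"
  have finT: "finite \<T>" using mesh unfolding M_reduced_mesh_def by blast
  have cardT: "\<And>T. T \<in> \<T> \<Longrightarrow> finite T \<and> card T = CARD('n) + 1"
    using mesh unfolding M_reduced_mesh_def by blast
  have acute: "\<And>T v w. T \<in> \<T> \<Longrightarrow> v \<in> T - {0} \<Longrightarrow> w \<in> T - {0} \<Longrightarrow> G v w \<ge> 0"
    using mesh unfolding M_reduced_mesh_def G_def by blast
  have finV: "finite V" unfolding V_def using finT cardT by auto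
  have Gdpos: "\<And>v. v \<noteq> 0 \<Longrightarrow> G v v > 0"
    using posdef rvec_nz unfolding sym_posdef_def G_def inner_M_def by blast
  define m2 where "m2 = Min ((\<lambda>v. G v v) ` V \<union> {1})"
  define R2 where "R2 = Max ((\<lambda>(v,w). G v w) ` (V \<times> V) \<union> {1})"
  define N where "N = CARD('n) + 1"
  have m2pos: "m2 > 0" unfolding m2_def using finV Gdpos V_def by (subst Min_gr_iff) auto
  have m2le: "\<And>v. v \<in> V \<Longrightarrow> m2 \<le> G v v" unfolding m2_def using finV by (intro Min_le) auto
  have R2ge: "\<And>v w. v \<in> V \<Longrightarrow> w \<in> V \<Longrightarrow> G v w \<le> R2" unfolding R2_def using finV
    by (intro Max_ge) force+
  have Npos: "N > 0" unfolding N_def by simp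
  define k where "k = min ((m2 / N) / (2 * sqrt R2)) ((1 - lam) * sqrt (m2 / N)) / 4"
  have "1 \<le> R2" unfolding R2_def using finV by (intro Max_ge) auto
  then have kpos: "k > 0" unfolding k_def using m2pos Npos lam by simp
  have step: "\<forall>w D. \<delta>p w = ennreal D \<longrightarrow> 0 \<le> D \<longrightarrow> D < real n * k \<longrightarrow> ennreal lam * \<delta>m w \<le> \<delta>p w" for n
  proof (induction n)
    case 0
    then show ?case using kpos by auto
  next
    case (Suc n)
    show ?case
    proof (intro allI impI)
      fix w D assume wD: "\<delta>p w = ennreal D" "0 \<le> D" "D < real (Suc n) * k"
      show "ennreal lam * \<delta>m w \<le> \<delta>p w"
      proof (cases "w = 0")
        case True
        then show ?thesis using sub unfolding sub_solution_def by simp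
      next
        case False
        have "hopf_lax M \<T> \<delta>p w \<le> \<delta>p w" using sup False unfolding super_solution_def by blast
        also have "\<dots> < ennreal (D + k)" using wD kpos by (simp add: ennreal_less_iff)
        finally have "hopf_lax M \<T> \<delta>p w < ennreal (D + k)" .
        then obtain S \<alpha> T where T: "T \<in> \<T>" "S \<subseteq> T - {0}" and Sne: "S \<noteq> {}"
          and apos: "\<forall>v\<in>S. \<alpha> v \<ge> 0" and asum: "(\<Sum>v\<in>S. \<alpha> v) = 1"
          and Flt: "ennreal (norm_M M (\<Sum>v\<in>S. \<alpha> v *\<^sub>R rvec v))
                + (\<Sum>v\<in>S. ennreal (\<alpha> v) * \<delta>p (w + v)) < ennreal (D + k)"
          unfolding hopf_lax_def Inf_less_iff by blast
        have finS: "finite S" using T cardT finite_subset by blast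
        have SV: "S \<subseteq> V" using T unfolding V_def by blast
        have cardS: "card S \<le> N" unfolding N_def
          using card_mono[of T S] T cardT by force
        define E where "E = max (D - k) 0"
        define L where "L = {v\<in>S. \<delta>p (w + v) < ennreal E}"
        define x where "x v = enn2real (\<delta>p (w + v))" for v
        have LS: "L \<subseteq> S" unfolding L_def by blast
        have finL: "finite L" using finS LS finite_subset by blast
        have xL: "\<And>v. v \<in> L \<Longrightarrow> \<delta>p (w + v) = ennreal (x v) \<and> 0 \<le> x v \<and> x v < E"
        proof -
          fix v assume "v \<in> L"
          then have lt: "\<delta>p (w + v) < ennreal E" unfolding L_def by blast
          then have "\<delta>p (w + v) \<noteq> top" by auto
          then have eq: "\<delta>p (w + v) = ennreal (x v)" unfolding x_def by (simp add: enn2real_nonneg ennreal_enn2real_if)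
          have "0 \<le> x v" unfolding x_def by simp
          moreover have "x v < E" using lt eq \<open>0 \<le> x v\<close> by (simp add: ennreal_less_iff)
          ultimately show "\<delta>p (w + v) = ennreal (x v) \<and> 0 \<le> x v \<and> x v < E" using eq by simp
        qed
        define P where "P = sqrt (\<Sum>v\<in>S. \<Sum>u\<in>S. \<alpha> v * \<alpha> u * G v u)"
        have Gpos: "\<And>v u. v \<in> S \<Longrightarrow> u \<in> S \<Longrightarrow> G v u \<ge> 0" using acute T by blast
        have Pnn: "P \<ge> 0" unfolding P_def using apos Gpos by (auto intro!: sum_nonneg)
        have normP: "norm_M M (\<Sum>v\<in>S. \<alpha> v *\<^sub>R rvec v) = P"
          unfolding P_def G_def by (rule norm_M_sum[OF finS])
        define a where "a = (\<Sum>v\<in>S-L. \<alpha> v)"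
        have a0: "a \<ge> 0" unfolding a_def using apos by (auto intro: sum_nonneg)
        have sxnn: "(\<Sum>v\<in>L. \<alpha> v * x v) \<ge> 0" using xL apos LS by (auto intro!: sum_nonneg)
        have h1: "(\<Sum>v\<in>S. ennreal (\<alpha> v) * \<delta>p (w + v))
              = (\<Sum>v\<in>S-L. ennreal (\<alpha> v) * \<delta>p (w + v)) + (\<Sum>v\<in>L. ennreal (\<alpha> v) * \<delta>p (w + v))"
          by (rule sum.subset_diff[OF LS finS])
        have h2: "(\<Sum>v\<in>L. ennreal (\<alpha> v) * \<delta>p (w + v)) = ennreal (\<Sum>v\<in>L. \<alpha> v * x v)"
        proof -
          have "(\<Sum>v\<in>L. ennreal (\<alpha> v) * \<delta>p (w + v)) = (\<Sum>v\<in>L. ennreal (\<alpha> v * x v))"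
            apply (rule sum.cong[OF refl]) using xL apos LS by (auto simp: ennreal_mult)
          also have "\<dots> = ennreal (\<Sum>v\<in>L. \<alpha> v * x v)" using xL apos LS by (subst sum_ennreal) auto
          finally show ?thesis .
        qed
        have h3: "(\<Sum>v\<in>S-L. ennreal (\<alpha> v) * \<delta>p (w + v)) \<ge> ennreal (a * E)"
        proof -
          have "(\<Sum>v\<in>S-L. ennreal (\<alpha> v) * \<delta>p (w + v)) \<ge> (\<Sum>v\<in>S-L. ennreal (\<alpha> v * E))"
          proof (rule sum_mono)
            fix v assume v: "v \<in> S - L"
            then have "\<delta>p (w + v) \<ge> ennreal E" unfolding L_def by auto
            then show "ennreal (\<alpha> v * E) \<le> ennreal (\<alpha> v) * \<delta>p (w + v)"
              using apos v by (simp add: ennreal_mult' mult_left_mono)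
          qed
          also have "(\<Sum>v\<in>S-L. ennreal (\<alpha> v * E)) = ennreal (a * E)" unfolding a_def E_def
            using apos by (subst sum_ennreal) (auto simp: sum_distrib_right)
          finally show ?thesis .
        qed
        have "ennreal P + (ennreal (a * E) + ennreal (\<Sum>v\<in>L. \<alpha> v * x v))
             \<le> ennreal P + ((\<Sum>v\<in>S-L. ennreal (\<alpha> v) * \<delta>p (w + v)) + (\<Sum>v\<in>L. ennreal (\<alpha> v) * \<delta>p (w + v)))"
          unfolding h2 by (intro add_left_mono add_right_mono h3)
        also have "\<dots> = ennreal (norm_M M (\<Sum>v\<in>S. \<alpha> v *\<^sub>R rvec v)) + (\<Sum>v\<in>S. ennreal (\<alpha> v) * \<delta>p (w + v))"
          unfolding h1 normP ..
        finally have f1: "ennreal P + (ennreal (a * E) + ennreal (\<Sum>v\<in>L. \<alpha> v * x v))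
             \<le> ennreal (norm_M M (\<Sum>v\<in>S. \<alpha> v *\<^sub>R rvec v)) + (\<Sum>v\<in>S. ennreal (\<alpha> v) * \<delta>p (w + v))" .
        have f2: "ennreal P + (ennreal (a * E) + ennreal (\<Sum>v\<in>L. \<alpha> v * x v))
           = ennreal (P + (\<Sum>v\<in>L. \<alpha> v * x v) + a * E)"
        proof -
          have aE: "a * E \<ge> 0" using a0 unfolding E_def by simp
          have "ennreal (P + (\<Sum>v\<in>L. \<alpha> v * x v) + a * E)
              = ennreal (P + (\<Sum>v\<in>L. \<alpha> v * x v)) + ennreal (a * E)"
            using Pnn sxnn aE by (intro ennreal_plus) auto
          also have "\<dots> = ennreal P + ennreal (\<Sum>v\<in>L. \<alpha> v * x v) + ennreal (a * E)"
            using Pnn sxnn by (subst ennreal_plus) auto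
          finally show ?thesis by (simp only: add_ac)
        qed
        have "ennreal (P + (\<Sum>v\<in>L. \<alpha> v * x v) + a * E) < ennreal (D + k)"
          unfolding f2[symmetric] by (rule le_less_trans[OF f1 Flt])
        then have ineq0: "P + (\<Sum>v\<in>L. \<alpha> v * x v) + a * E < D + k"
          using Pnn sxnn a0 E_def by (subst (asm) ennreal_less_iff) auto
        have "a * (D - k) \<le> a * E" unfolding E_def using a0 by (simp add: mult_left_mono)
        moreover have "a = 1 - (\<Sum>v\<in>L. \<alpha> v)" unfolding a_def using asum sum.subset_diff[OF LS finS, of \<alpha>] by simp
        ultimately have ineq: "P + (\<Sum>v\<in>L. \<alpha> v * x v) + (1 - (\<Sum>v\<in>L. \<alpha> v)) * (D - k) \<le> D + k"
          using ineq0 by simp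
        have cr: "(\<Sum>v\<in>L. \<alpha> v) > 0 \<and>
           lam * sqrt (\<Sum>v\<in>L. \<Sum>u\<in>L. \<alpha> v * \<alpha> u * G v u) + (\<Sum>v\<in>L. \<alpha> v * x v)
            < (\<Sum>v\<in>L. \<alpha> v) * D"
          apply (rule core[OF finS LS cardS Npos _ asum _ _ m2pos _ lam k_def])
          using apos Gpos m2le R2ge SV ineq unfolding P_def by (auto simp: subset_iff)
        define sL where "sL = (\<Sum>v\<in>L. \<alpha> v)"
        define PL where "PL = sqrt (\<Sum>v\<in>L. \<Sum>u\<in>L. \<alpha> v * \<alpha> u * G v u)"
        have sLpos: "sL > 0" and res: "lam * PL + (\<Sum>v\<in>L. \<alpha> v * x v) < sL * D"
          using cr unfolding sL_def PL_def by auto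
        define \<beta> where "\<beta> v = \<alpha> v / sL" for v
        have PLnn: "PL \<ge> 0" unfolding PL_def using apos Gpos LS by (auto intro!: sum_nonneg mult_nonneg_nonneg simp: subset_iff)
        have Lne: "L \<noteq> {}" using sLpos unfolding sL_def by auto
        have bpos: "\<forall>v\<in>L. \<beta> v \<ge> 0" unfolding \<beta>_def using apos LS sLpos by auto
        have bsum: "(\<Sum>v\<in>L. \<beta> v) = 1" unfolding \<beta>_def using sLpos
          by (simp add: sum_divide_distrib[symmetric] sL_def)
        have LT: "L \<subseteq> T - {0}" using LS T by blast
        have normL: "norm_M M (\<Sum>v\<in>L. \<beta> v *\<^sub>R rvec v) = PL / sL"
        proof -
          have "norm_M M (\<Sum>v\<in>L. \<beta> v *\<^sub>R rvec v) = sqrt (\<Sum>v\<in>L. \<Sum>u\<in>L. \<beta> v * \<beta> u * G v u)"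
            unfolding G_def by (rule norm_M_sum[OF finL])
          also have "(\<Sum>v\<in>L. \<Sum>u\<in>L. \<beta> v * \<beta> u * G v u)
                     = (\<Sum>v\<in>L. \<Sum>u\<in>L. \<alpha> v * \<alpha> u * G v u) / sL^2"
            unfolding \<beta>_def by (simp add: sum_divide_distrib power2_eq_square)
          also have "sqrt \<dots> = PL / sL" unfolding PL_def using sLpos by (simp add: real_sqrt_divide)
          finally show ?thesis .
        qed
        have hl: "hopf_lax M \<T> \<delta>m w \<le> ennreal (norm_M M (\<Sum>v\<in>L. \<beta> v *\<^sub>R rvec v))
                + (\<Sum>v\<in>L. ennreal (\<beta> v) * \<delta>m (w + v))"
          unfolding hopf_lax_def by (rule Inf_lower) (use T LT Lne bpos bsum in blast)
        have hs: "\<delta>m w \<le> hopf_lax M \<T> \<delta>m w" using sub False unfolding sub_solution_def by blast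
        have dm: "\<delta>m w \<le> ennreal (PL / sL) + (\<Sum>v\<in>L. ennreal (\<beta> v) * \<delta>m (w + v))"
          unfolding normL[symmetric] by (rule order_trans[OF hs hl])
        have IHv: "\<And>v. v \<in> L \<Longrightarrow> ennreal lam * \<delta>m (w + v) \<le> ennreal (x v)"
        proof -
          fix v assume v: "v \<in> L"
          then have xv: "\<delta>p (w + v) = ennreal (x v)" "0 \<le> x v" "x v < E" using xL by auto
          then have "E = D - k" unfolding E_def by linarith
          then have "x v < real n * k" using xv wD by (simp add: algebra_simps)
          then show "ennreal lam * \<delta>m (w + v) \<le> ennreal (x v)" using Suc.IH xv by metis
        qed
        have "ennreal lam * \<delta>m w \<le> ennreal lam * (ennreal (PL / sL) + (\<Sum>v\<in>L. ennreal (\<beta> v) * \<delta>m (w + v)))"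
          using dm by (rule mult_left_mono) simp
        also have "\<dots> = ennreal (lam * (PL / sL)) + (\<Sum>v\<in>L. ennreal (\<beta> v) * (ennreal lam * \<delta>m (w + v)))"
        proof -
          have lm: "ennreal lam * ennreal (PL / sL) = ennreal (lam * (PL / sL))"
            using lam PLnn sLpos by (subst ennreal_mult) auto
          show ?thesis unfolding lm[symmetric] by (simp add: distrib_left sum_distrib_left mult.left_commute)
        qed
        also have "\<dots> \<le> ennreal (lam * (PL / sL)) + (\<Sum>v\<in>L. ennreal (\<beta> v) * ennreal (x v))"
          by (intro add_left_mono sum_mono mult_left_mono IHv) auto
        also have "\<dots> = ennreal (lam * (PL / sL) + (\<Sum>v\<in>L. \<beta> v * x v))"
        proof -
          have "(\<Sum>v\<in>L. ennreal (\<beta> v) * ennreal (x v)) = (\<Sum>v\<in>L. ennreal (\<beta> v * x v))"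
            apply (rule sum.cong[OF refl]) using bpos xL by (auto simp: ennreal_mult)
          also have "\<dots> = ennreal (\<Sum>v\<in>L. \<beta> v * x v)" using bpos xL by (subst sum_ennreal) auto
          finally show ?thesis using lam sLpos PLnn
            by (subst ennreal_plus) (auto intro!: sum_nonneg simp: bpos xL)
        qed
        also have "\<dots> \<le> ennreal D"
        proof -
          have "lam * (PL / sL) + (\<Sum>v\<in>L. \<beta> v * x v) = (lam * PL + (\<Sum>v\<in>L. \<alpha> v * x v)) / sL"
            unfolding \<beta>_def by (simp add: add_divide_distrib sum_divide_distrib)
          also have "\<dots> < D" using res sLpos by (simp add: divide_less_eq mult.commute)
          finally show ?thesis by (intro ennreal_leI) simp
        qed
        finally show ?thesis using wD by simp
      qed
    qed
  qed
  show ?thesis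
  proof (cases "\<delta>p z = top")
    case True
    then show ?thesis by simp
  next
    case False
    then obtain D where D: "\<delta>p z = ennreal D" "0 \<le> D" by (cases "\<delta>p z") auto
    obtain n :: nat where "D / k < n" using reals_Archimedean2 by blast
    then have "D < real n * k" using kpos by (simp add: field_simps)
    then show ?thesis using step[of n] D by blast
  qed
qed

theorem proposition1p4:
  fixes M :: "real ^ 'n ^ 'n" and \<T> :: "(int ^ 'n) set set"
    and \<delta>p \<delta>m :: "int ^ 'n \<Rightarrow> ennreal"
  assumes "sym_posdef M"
    and "M_reduced_mesh M \<T>"
    and "super_solution M \<T> \<delta>p"
    and "sub_solution M \<T> \<delta>m"
  shows "\<forall>z. \<delta>m z \<le> \<delta>p z"
proof
  fix z
  have sc: "\<And>lam. 0 \<le> lam \<Longrightarrow> lam < 1 \<Longrightarrow> ennreal lam * \<delta>m z \<le> \<delta>p z"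
    using scaled[OF assms] by blast
  show "\<delta>m z \<le> \<delta>p z"
  proof (cases "\<delta>p z = top")
    case True
    then show ?thesis by simp
  next
    case False
    then obtain D where D: "\<delta>p z = ennreal D" "0 \<le> D" by (cases "\<delta>p z") auto
    show ?thesis
    proof (cases "\<delta>m z = top")
      case True
      have "ennreal (1/2) * \<delta>m z \<le> \<delta>p z" using sc[of "1/2"] by simp
      then show ?thesis using True D by (simp add: ennreal_mult_top)
    next
      case False
      then obtain y where y: "\<delta>m z = ennreal y" "0 \<le> y" by (cases "\<delta>m z") auto
      show ?thesis
      proof (rule ccontr)
        assume "\<not> \<delta>m z \<le> \<delta>p z"
        then have yD: "y > D" using y D by auto
        define lam where "lam = (y + D) / (2 * y)"
        have l0: "0 \<le> lam" "lam < 1" unfolding lam_def using yD D by (auto simp: field_simps)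
        have "ennreal lam * ennreal y \<le> ennreal D" using sc[OF l0] y D by simp
        then have "lam * y \<le> D" using l0 y D by (simp add: ennreal_mult[symmetric])
        moreover have "lam * y = (y + D) / 2" unfolding lam_def using yD D by (simp add: field_simps)
        ultimately show False using yD by simp
      qed
    qed
  qed
qed

end
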